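(* Let $S\subseteq\Sigma^n$ be a double-code and $i\in[n]$. (a) $S$ is complementable if and only if $\backslash_i S$ is a complementable double-code. (b) $S$ is prime if and only if $\backslash_i S$ is a prime double-code.
   Context: Let $\Sigma=\{0,1,2,3\}$, $[n]=\{1,\ldots,n\}$. An $i$-line of $\Sigma^n$ is a set of the four words that agree in all coordinates except the $i$th; a line is an $i$-line for some $i$. A double-code is a set meeting every line in $0$ or $2$ elements; a double-MDS-code is a set meeting every line in exactly $2$ elements; a double-code is complementable if contained in a double-MDS-code, and prime if complementable, nonempty and not partitionable into two or more nonempty double-codes. For $S\subseteq\Sigma^n$ and $i\in[n]$, $\mathcal E_i(S)$ is the union of all $i$-lines that meet $S$, and $\backslash_i S=\mathcal E_i(S)\setminus S$. *)

theory Defs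
  imports Main
begin

text \<open>Words of Sigma^n, Sigma = {0,1,2,3}, are lists of length n with entries below 4.
  Coordinate i (1-based, i in [n]) is the list position i - 1.\<close>

definition words :: "nat \<Rightarrow> nat list set" where
  "words n = {x. length x = n \<and> (\<forall>a\<in>set x. a < 4)}"

definition iline :: "nat \<Rightarrow> nat \<Rightarrow> nat list set \<Rightarrow> bool" where
  "iline n i L \<longleftrightarrow> i \<in> {1..n} \<and>
     (\<exists>x\<in>words n. L = {x[i - 1 := a] | a. a < 4})"

definition is_line :: "nat \<Rightarrow> nat list set \<Rightarrow> bool" where
  "is_line n L \<longleftrightarrow> (\<exists>i. iline n i L)"

definition double_code :: "nat \<Rightarrow> nat list set \<Rightarrow> bool" where
  "double_code n S \<longleftrightarrow> S \<subseteq> words n \<and>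
     (\<forall>L. is_line n L \<longrightarrow> card (S \<inter> L) = 0 \<or> card (S \<inter> L) = 2)"

definition double_MDS_code :: "nat \<Rightarrow> nat list set \<Rightarrow> bool" where
  "double_MDS_code n S \<longleftrightarrow> S \<subseteq> words n \<and>
     (\<forall>L. is_line n L \<longrightarrow> card (S \<inter> L) = 2)"

definition complementable :: "nat \<Rightarrow> nat list set \<Rightarrow> bool" where
  "complementable n S \<longleftrightarrow> double_code n S \<and> (\<exists>M. double_MDS_code n M \<and> S \<subseteq> M)"

definition prime_code :: "nat \<Rightarrow> nat list set \<Rightarrow> bool" where
  "prime_code n S \<longleftrightarrow> complementable n S \<and> S \<noteq> {} \<and>
     \<not> (\<exists>P. card P \<ge> 2 \<and> (\<forall>T\<in>P. T \<noteq> {} \<and> double_code n T) \<and>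
            (\<forall>T\<in>P. \<forall>U\<in>P. T \<noteq> U \<longrightarrow> T \<inter> U = {}) \<and> \<Union>P = S)"

definition ext_i :: "nat \<Rightarrow> nat \<Rightarrow> nat list set \<Rightarrow> nat list set" where
  "ext_i n i S = \<Union>{L. iline n i L \<and> L \<inter> S \<noteq> {}}"

definition bs_i :: "nat \<Rightarrow> nat \<Rightarrow> nat list set \<Rightarrow> nat list set" where
  "bs_i n i S = ext_i n i S - S"

end

theory Submission
  imports Defs
begin
definition cnt :: "(nat \<Rightarrow> bool) \<Rightarrow> nat" where
 "cnt P = card {b\<in>{..<4::nat}. P b}"

lemma cnt_sum: "cnt P = (\<Sum>b<4. of_bool (P b))"
proof -
  have "{b\<in>{..<4::nat}. P b} = {..<4} \<inter> {x. P x}" by auto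
  then show ?thesis unfolding cnt_def by simp
qed

lemma cnt_cong: "(\<And>b. b < 4 \<Longrightarrow> P b = Q b) \<Longrightarrow> cnt P = cnt Q"
  unfolding cnt_def by (rule arg_cong[where f=card]) auto

lemma card_split: "finite A \<Longrightarrow> card {b\<in>A. P b} + card {b\<in>A. \<not> P b} = card A"
proof -
  assume f: "finite A"
  have "A = {b\<in>A. P b} \<union> {b\<in>A. \<not> P b}" by auto
  moreover have "card ({b\<in>A. P b} \<union> {b\<in>A. \<not> P b}) = card {b\<in>A. P b} + card {b\<in>A. \<not> P b}"
    by (rule card_Un_disjoint) (use f in auto)
  ultimately show ?thesis by simp
qed

lemma cnt_compl: "cnt P + cnt (\<lambda>b. \<not> P b) = 4"
  unfolding cnt_def using card_split[of "{..<4::nat}" P] by simp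

lemma cnt_split: "cnt (\<lambda>b. R b \<and> P b) + cnt (\<lambda>b. R b \<and> \<not> P b) = cnt R"
proof -
  have "card {b\<in>{b\<in>{..<4::nat}. R b}. P b} + card {b\<in>{b\<in>{..<4::nat}. R b}. \<not> P b} = card {b\<in>{..<4::nat}. R b}"
    by (rule card_split) auto
  moreover have "{b\<in>{b\<in>{..<4::nat}. R b}. P b} = {b\<in>{..<4}. R b \<and> P b}" by auto
  moreover have "{b\<in>{b\<in>{..<4::nat}. R b}. \<not> P b} = {b\<in>{..<4}. R b \<and> \<not> P b}" by auto
  ultimately show ?thesis unfolding cnt_def by simp
qed

lemma cnt_mono: "(\<And>b. b < 4 \<Longrightarrow> P b \<Longrightarrow> Q b) \<Longrightarrow> cnt P \<le> cnt Q"
  unfolding cnt_def by (rule card_mono) auto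

lemma cnt_eq_sub: "(\<And>b. b < 4 \<Longrightarrow> P b \<Longrightarrow> Q b) \<Longrightarrow> cnt P = cnt Q \<Longrightarrow> b < 4 \<Longrightarrow> P b = Q b"
proof -
  assume a: "\<And>b. b < 4 \<Longrightarrow> P b \<Longrightarrow> Q b" "cnt P = cnt Q" "b < 4"
  have "{b\<in>{..<4::nat}. P b} = {b\<in>{..<4::nat}. Q b}"
    by (rule card_subset_eq) (use a in \<open>auto simp: cnt_def\<close>)
  then show ?thesis using a(3) by blast
qed

lemma plane:
  fixes s mm :: "nat \<Rightarrow> nat \<Rightarrow> bool"
  assumes rows: "\<And>b. b < 4 \<Longrightarrow> cnt (s b) = 0 \<or> cnt (s b) = 2"
   and rowsm: "\<And>b. b < 4 \<Longrightarrow> cnt (mm b) = 2"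
   and cols: "\<And>a. a < 4 \<Longrightarrow> cnt (\<lambda>b. s b a) = 0 \<or> cnt (\<lambda>b. s b a) = 2"
   and colsm: "\<And>a. a < 4 \<Longrightarrow> cnt (\<lambda>b. mm b a) = 2"
   and sub: "\<And>a b. a < 4 \<Longrightarrow> b < 4 \<Longrightarrow> s b a \<Longrightarrow> mm b a"
   and a0: "a0 < 4"
  shows "cnt (\<lambda>b. \<not> s b a0 \<and> (\<exists>a<4. s b a)) = 0 \<or> cnt (\<lambda>b. \<not> s b a0 \<and> (\<exists>a<4. s b a)) = 2"
proof -
  define r where "r b = (\<exists>a<4. s b a)" for b
  have srm: "s b a = (r b \<and> mm b a)" if b: "b < 4" and a: "a < 4" for a b
  proof (cases "r b")
    case True
    then have "cnt (s b) \<noteq> 0" unfolding r_def cnt_def using card_eq_0_iff by fastforce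
    then have "cnt (s b) = cnt (mm b)" using rows[OF b] rowsm[OF b] by auto
    then have "s b a = mm b a" using cnt_eq_sub[of "s b" "mm b" a] sub b a by blast
    then show ?thesis using True by simp
  qed (use a r_def in auto)
  have g: "cnt (\<lambda>b. \<not> s b a0 \<and> (\<exists>a<4. s b a)) = cnt (\<lambda>b. r b \<and> \<not> mm b a0)"
  proof (rule cnt_cong)
    fix b :: nat assume b: "b < 4"
    have "(\<exists>a<4. s b a) = r b" by (simp add: r_def)
    then show "(\<not> s b a0 \<and> (\<exists>a<4. s b a)) = (r b \<and> \<not> mm b a0)" using srm[OF b a0] by blast
  qed
  have colR: "cnt (\<lambda>b. r b \<and> mm b a) = 0 \<or> cnt (\<lambda>b. r b \<and> mm b a) = 2" if a: "a < 4" for a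
  proof -
    have "cnt (\<lambda>b. s b a) = cnt (\<lambda>b. r b \<and> mm b a)" by (rule cnt_cong) (use srm a in auto)
    then show ?thesis using cols[OF a] by simp
  qed
  have colF: "cnt (\<lambda>b. \<not> mm b a) = 2" if a: "a < 4" for a
    using cnt_compl[of "\<lambda>b. mm b a"] colsm[OF a] by simp
  have rowF: "cnt (\<lambda>a. \<not> mm b a) = 2" if b: "b < 4" for b
    using cnt_compl[of "mm b"] rowsm[OF b] by simp
  have le: "cnt (\<lambda>b. r b \<and> \<not> mm b a) \<le> 2" if a: "a < 4" for a
    using cnt_mono[of "\<lambda>b. r b \<and> \<not> mm b a" "\<lambda>b. \<not> mm b a"] colF[OF a] by auto
  have sp: "cnt (\<lambda>b. r b \<and> mm b a) + cnt (\<lambda>b. r b \<and> \<not> mm b a) = cnt r" for a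
    by (rule cnt_split)
  show ?thesis
  proof (cases "even (cnt r)")
    case True
    then show ?thesis unfolding g using colR[OF a0] le[OF a0] sp[of a0] by presburger
  next
    case False
    have one: "cnt (\<lambda>b. r b \<and> \<not> mm b a) = 1" if a: "a < 4" for a
      using colR[OF a] le[OF a] sp[of a] False by presburger
    have "(\<Sum>a<4. cnt (\<lambda>b. r b \<and> \<not> mm b a)) = (\<Sum>a<(4::nat). (1::nat))"
      by (rule sum.cong) (use one in auto)
    then have L: "(\<Sum>a<4. cnt (\<lambda>b. r b \<and> \<not> mm b a)) = 4" by simp
    have "(\<Sum>a<4. cnt (\<lambda>b. r b \<and> \<not> mm b a)) = (\<Sum>a<4::nat. \<Sum>b<4::nat. of_bool (r b \<and> \<not> mm b a))"
      by (simp add: cnt_sum)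
    also have "\<dots> = (\<Sum>b<4::nat. \<Sum>a<4::nat. of_bool (r b \<and> \<not> mm b a))"
      by (rule sum.swap)
    also have "\<dots> = (\<Sum>b<4::nat. of_bool (r b) * cnt (\<lambda>a. \<not> mm b a))"
      by (rule sum.cong) (auto simp: cnt_sum)
    also have "\<dots> = (\<Sum>b<4::nat. of_bool (r b) * 2)"
      by (rule sum.cong) (use rowF in auto)
    also have "\<dots> = 2 * cnt r"
      by (simp add: cnt_sum sum_distrib_right mult.commute)
    finally show ?thesis using L False by simp
  qed
qed

lemma cnt_zero: "cnt P = 0 \<longleftrightarrow> \<not> (\<exists>b<4. P b)"
  unfolding cnt_def by auto

definition ln :: "nat \<Rightarrow> nat list \<Rightarrow> nat list set" where
  "ln m x = {x[m:=a] | a. a < 4}"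

definition EE :: "nat \<Rightarrow> nat \<Rightarrow> nat list set \<Rightarrow> nat list set" where
  "EE n k S = {y\<in>words n. \<exists>a<4. y[k:=a] \<in> S}"

lemma finite_words: "finite (words n)"
proof -
  have "words n \<subseteq> {xs. set xs \<subseteq> {..<4} \<and> length xs = n}" unfolding words_def by auto
  moreover have "finite {xs. set xs \<subseteq> {..<4::nat} \<and> length xs = n}"
    by (rule finite_lists_length_eq) auto
  ultimately show ?thesis by (rule finite_subset)
qed

lemma upd_words: "x \<in> words n \<Longrightarrow> a < 4 \<Longrightarrow> x[k:=a] \<in> words n"
  unfolding words_def using set_update_subset_insert by fastforce

lemma nth_words: "x \<in> words n \<Longrightarrow> k < n \<Longrightarrow> x ! k < 4"
  unfolding words_def by auto

lemma len_words: "x \<in> words n \<Longrightarrow> length x = n"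
  unfolding words_def by auto

lemma is_line_iff: "is_line n L \<longleftrightarrow> (\<exists>m<n. \<exists>x\<in>words n. L = ln m x)"
  unfolding is_line_def iline_def ln_def
proof safe
  fix i x assume "i \<in> {1..n}" "x \<in> words n"
  then show "\<exists>m<n. \<exists>xa\<in>words n. {x[i - 1 := a] |a. a < 4} = {xa[m := a] |a. a < 4}"
    by (intro exI[of _ "i - 1"]) auto
next
  fix m x assume "m < n" "x \<in> words n"
  then show "\<exists>i. i \<in> {1..n} \<and> (\<exists>xa\<in>words n. {x[m := a] |a. a < 4} = {xa[i - 1 := a] |a. a < 4})"
    by (intro exI[of _ "Suc m"]) auto
qed

lemma card_inter_ln: "m < length x \<Longrightarrow> card (A \<inter> ln m x) = cnt (\<lambda>b. x[m:=b] \<in> A)"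
proof -
  assume m: "m < length x"
  have e: "A \<inter> ln m x = (\<lambda>b. x[m:=b]) ` {b\<in>{..<4}. x[m:=b] \<in> A}"
    unfolding ln_def by auto
  have "inj_on (\<lambda>b. x[m:=b]) {b\<in>{..<4::nat}. x[m:=b] \<in> A}"
  proof (rule inj_onI)
    fix a b assume "x[m:=a] = x[m:=b]"
    then have "x[m:=a] ! m = x[m:=b] ! m" by simp
    then show "a = b" using m by simp
  qed
  then show ?thesis unfolding e cnt_def by (rule card_image)
qed

lemma dc_iff: "double_code n S \<longleftrightarrow> S \<subseteq> words n \<and>
   (\<forall>m<n. \<forall>x\<in>words n. cnt (\<lambda>b. x[m:=b] \<in> S) = 0 \<or> cnt (\<lambda>b. x[m:=b] \<in> S) = 2)"
proof -
  have "(\<forall>L. is_line n L \<longrightarrow> card (S \<inter> L) = 0 \<or> card (S \<inter> L) = 2) \<longleftrightarrow>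
     (\<forall>m<n. \<forall>x\<in>words n. cnt (\<lambda>b. x[m:=b] \<in> S) = 0 \<or> cnt (\<lambda>b. x[m:=b] \<in> S) = 2)"
    unfolding is_line_iff
  proof safe
    fix m x assume h: "\<forall>L. (\<exists>m<n. \<exists>x\<in>words n. L = ln m x) \<longrightarrow> card (S \<inter> L) = 0 \<or> card (S \<inter> L) = 2"
      "m < n" "x \<in> words n" "cnt (\<lambda>b. x[m := b] \<in> S) \<noteq> 2"
    then have "card (S \<inter> ln m x) = 0 \<or> card (S \<inter> ln m x) = 2" by blast
    then show "cnt (\<lambda>b. x[m := b] \<in> S) = 0" using h card_inter_ln[of m x S] len_words[OF h(3)] by auto
  next
    fix m x assume h: "\<forall>m<n. \<forall>x\<in>words n. cnt (\<lambda>b. x[m:=b] \<in> S) = 0 \<or> cnt (\<lambda>b. x[m:=b] \<in> S) = 2"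
      "m < n" "x \<in> words n" "card (S \<inter> ln m x) \<noteq> 2"
    then show "card (S \<inter> ln m x) = 0" using card_inter_ln[of m x S] len_words[OF h(3)] by auto
  qed
  then show ?thesis unfolding double_code_def by blast
qed

lemma mds_iff: "double_MDS_code n S \<longleftrightarrow> S \<subseteq> words n \<and>
   (\<forall>m<n. \<forall>x\<in>words n. cnt (\<lambda>b. x[m:=b] \<in> S) = 2)"
proof -
  have "(\<forall>L. is_line n L \<longrightarrow> card (S \<inter> L) = 2) \<longleftrightarrow>
     (\<forall>m<n. \<forall>x\<in>words n. cnt (\<lambda>b. x[m:=b] \<in> S) = 2)"
    unfolding is_line_iff
  proof safe
    fix m x assume h: "\<forall>L. (\<exists>m<n. \<exists>x\<in>words n. L = ln m x) \<longrightarrow> card (S \<inter> L) = 2"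
      "m < n" "x \<in> words n"
    then have "card (S \<inter> ln m x) = 2" by blast
    then show "cnt (\<lambda>b. x[m := b] \<in> S) = 2" using h card_inter_ln[of m x S] len_words[OF h(3)] by auto
  next
    fix m x assume h: "\<forall>m<n. \<forall>x\<in>words n. cnt (\<lambda>b. x[m:=b] \<in> S) = 2"
      "m < n" "x \<in> words n"
    then show "card (S \<inter> ln m x) = 2" using card_inter_ln[of m x S] len_words[OF h(3)] by auto
  qed
  then show ?thesis unfolding double_MDS_code_def by blast
qed

lemma ext_char:
  assumes "S \<subseteq> words n" "i \<in> {1..n}"
  shows "ext_i n i S = EE n (i - 1) S"
proof -
  let ?k = "i - 1"
  have k: "?k < n" using assms(2) by auto
  show ?thesis
  proof
    show "ext_i n i S \<subseteq> EE n ?k S"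
    proof
      fix y assume "y \<in> ext_i n i S"
      then obtain x a b where x: "x \<in> words n" "y = x[?k:=a]" "a < 4" "x[?k:=b] \<in> S" "b < 4"
        unfolding ext_i_def iline_def by blast
      then show "y \<in> EE n ?k S" unfolding EE_def using upd_words by auto
    qed
  next
    show "EE n ?k S \<subseteq> ext_i n i S"
    proof
      fix y assume "y \<in> EE n ?k S"
      then obtain a where y: "y \<in> words n" "a < 4" "y[?k:=a] \<in> S" unfolding EE_def by auto
      have "y = y[?k := y ! ?k]" by simp
      moreover have "y ! ?k < 4" using nth_words[OF y(1) k] .
      ultimately have "y \<in> {y[?k:=a] | a. a < 4}" by blast
      moreover have "{y[?k:=a] | a. a < 4} \<inter> S \<noteq> {}" using y by blast
      moreover have "iline n i {y[?k:=a] | a. a < 4}" unfolding iline_def using assms(2) y(1) by blast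
      ultimately show "y \<in> ext_i n i S" unfolding ext_i_def by blast
    qed
  qed
qed


lemma dc_sub: "double_code n S \<Longrightarrow> S \<subseteq> words n" unfolding double_code_def by blast

lemma dc_row: "double_code n S \<Longrightarrow> m < n \<Longrightarrow> x \<in> words n \<Longrightarrow>
    cnt (\<lambda>b. x[m:=b] \<in> S) = 0 \<or> cnt (\<lambda>b. x[m:=b] \<in> S) = 2"
  unfolding dc_iff by blast

lemma mds_row: "double_MDS_code n S \<Longrightarrow> m < n \<Longrightarrow> x \<in> words n \<Longrightarrow>
    cnt (\<lambda>b. x[m:=b] \<in> S) = 2"
  unfolding mds_iff by blast

lemma mds_compl:
  assumes "double_MDS_code n M"
  shows "double_MDS_code n (words n - M)"
  unfolding mds_iff
proof safe
  fix m x assume h: "m < n" "x \<in> words n"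
  have "cnt (\<lambda>b. x[m:=b] \<in> words n - M) = cnt (\<lambda>b. \<not> x[m:=b] \<in> M)"
    by (rule cnt_cong) (use upd_words h in auto)
  then show "cnt (\<lambda>b. x[m:=b] \<in> words n - M) = 2"
    using cnt_compl[of "\<lambda>b. x[m:=b] \<in> M"] mds_row[OF assms h] by simp
qed

lemma self_EE: "S \<subseteq> words n \<Longrightarrow> k < n \<Longrightarrow> S \<subseteq> EE n k S"
proof
  fix s assume "S \<subseteq> words n" "k < n" "s \<in> S"
  then show "s \<in> EE n k S" unfolding EE_def using nth_words[of s n k]
    by (auto intro!: exI[of _ "s ! k"])
qed

lemma ex_not_in:
  assumes "double_code n S" "k < n" "x \<in> words n"
  shows "\<exists>a<4. x[k:=a] \<notin> S"
proof -
  have "cnt (\<lambda>b. x[k:=b] \<in> S) \<le> 2" using dc_row[OF assms] by auto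
  then have "cnt (\<lambda>b. \<not> x[k:=b] \<in> S) \<noteq> 0" using cnt_compl[of "\<lambda>b. x[k:=b] \<in> S"] by auto
  then show ?thesis using cnt_zero[of "\<lambda>b. x[k:=b] \<notin> S"] by auto
qed

lemma lemA:
  assumes dc: "double_code n S" and M: "double_MDS_code n M" and SM: "S \<subseteq> M" and k: "k < n"
  shows "double_code n (EE n k S - S) \<and> EE n k S - S \<subseteq> words n - M"
proof
  have Sw: "S \<subseteq> words n" using dc_sub[OF dc] .
  show sub: "EE n k S - S \<subseteq> words n - M"
  proof
    fix y assume y: "y \<in> EE n k S - S"
    then obtain a where ya: "y \<in> words n" "a < 4" "y[k:=a] \<in> S" "y \<notin> S" unfolding EE_def by auto
    have "cnt (\<lambda>b. y[k:=b] \<in> S) \<noteq> 0" using ya cnt_zero[of "\<lambda>b. y[k:=b] \<in> S"] by blast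
    then have "cnt (\<lambda>b. y[k:=b] \<in> S) = cnt (\<lambda>b. y[k:=b] \<in> M)"
      using dc_row[OF dc k ya(1)] mds_row[OF M k ya(1)] by auto
    moreover have "y ! k < 4" using nth_words[OF ya(1) k] .
    moreover have "\<And>b. b < 4 \<Longrightarrow> y[k:=b] \<in> S \<Longrightarrow> y[k:=b] \<in> M" using SM by blast
    ultimately have "(y[k:=y!k] \<in> S) = (y[k:=y!k] \<in> M)"
      by (intro cnt_eq_sub[of "\<lambda>b. y[k:=b] \<in> S" "\<lambda>b. y[k:=b] \<in> M" "y!k"])
    then show "y \<in> words n - M" using ya by auto
  qed
  show "double_code n (EE n k S - S)"
    unfolding dc_iff
  proof safe
    fix y assume "y \<in> EE n k S" then show "y \<in> words n" unfolding EE_def by auto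
  next
    fix m x assume m: "m < n" and x: "x \<in> words n" and ne: "cnt (\<lambda>b. x[m:=b] \<in> EE n k S - S) \<noteq> 2"
    show "cnt (\<lambda>b. x[m:=b] \<in> EE n k S - S) = 0"
    proof (cases "m = k")
      case True
      show ?thesis
      proof (cases "\<exists>a<4. x[k:=a] \<in> S")
        case ex: True
        have "cnt (\<lambda>b. x[m:=b] \<in> EE n k S - S) = cnt (\<lambda>b. \<not> x[k:=b] \<in> S)"
        proof (rule cnt_cong)
          fix b :: nat assume b: "b < 4"
          show "(x[m:=b] \<in> EE n k S - S) = (\<not> x[k:=b] \<in> S)"
            using upd_words[OF x b] ex True by (simp add: EE_def)
        qed
        moreover have "cnt (\<lambda>b. x[k:=b] \<in> S) = 2" using dc_row[OF dc k x] ex cnt_zero[of "\<lambda>b. x[k:=b] \<in> S"] by blast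
        ultimately show ?thesis using ne cnt_compl[of "\<lambda>b. x[k:=b] \<in> S"] by simp
      next
        case nex: False
        have "cnt (\<lambda>b. x[m:=b] \<in> EE n k S - S) = cnt (\<lambda>b. False)"
        proof (rule cnt_cong)
          fix b :: nat assume b: "b < 4"
          show "(x[m:=b] \<in> EE n k S - S) = False"
            using nex True by (simp add: EE_def)
        qed
        then show ?thesis by (simp add: cnt_def)
      qed
    next
      case False
      define s where "s b a = ((x[m:=b])[k:=a] \<in> S)" for b a
      define mm where "mm b a = ((x[m:=b])[k:=a] \<in> M)" for b a
      have sw: "(x[k:=a])[m:=b] = (x[m:=b])[k:=a]" for a b using False by (simp add: list_update_swap)
      have "cnt (\<lambda>b. \<not> s b (x!k) \<and> (\<exists>a<4. s b a)) = 0 \<or> cnt (\<lambda>b. \<not> s b (x!k) \<and> (\<exists>a<4. s b a)) = 2"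
      proof (rule plane)
        fix b :: nat assume b: "b < 4"
        show "cnt (s b) = 0 \<or> cnt (s b) = 2" unfolding s_def using dc_row[OF dc k upd_words[OF x b]] .
        show "cnt (mm b) = 2" unfolding mm_def using mds_row[OF M k upd_words[OF x b]] .
      next
        fix a :: nat assume a: "a < 4"
        show "cnt (\<lambda>b. s b a) = 0 \<or> cnt (\<lambda>b. s b a) = 2" unfolding s_def sw[symmetric]
          using dc_row[OF dc m upd_words[OF x a]] .
        show "cnt (\<lambda>b. mm b a) = 2" unfolding mm_def sw[symmetric]
          using mds_row[OF M m upd_words[OF x a]] .
      next
        fix a b assume "s b a" then show "mm b a" unfolding s_def mm_def using SM by blast
      next
        show "x ! k < 4" using nth_words[OF x k] .
      qed
      moreover have "cnt (\<lambda>b. x[m:=b] \<in> EE n k S - S) = cnt (\<lambda>b. \<not> s b (x!k) \<and> (\<exists>a<4. s b a))"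
      proof (rule cnt_cong)
        fix b :: nat assume b: "b < 4"
        have "(x[m:=b])[k:=x!k] = x[m:=b]" using False by (simp add: list_update_swap[OF False])
        then show "(x[m:=b] \<in> EE n k S - S) = (\<not> s b (x!k) \<and> (\<exists>a<4. s b a))"
          unfolding s_def EE_def using upd_words[OF x b] by auto
      qed
      ultimately show ?thesis using ne by simp
    qed
  qed
qed

lemma EE_T:
  assumes dc: "double_code n S" and k: "k < n"
  shows "EE n k (EE n k S - S) = EE n k S"
proof -
  have "(\<exists>a<4. y[k:=a] \<in> EE n k S - S) = (\<exists>a<4. y[k:=a] \<in> S)" if y: "y \<in> words n" for y
  proof
    assume "\<exists>a<4. y[k:=a] \<in> EE n k S - S"
    then show "\<exists>a<4. y[k:=a] \<in> S" unfolding EE_def by auto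
  next
    assume h: "\<exists>a<4. y[k:=a] \<in> S"
    obtain a where a: "a < 4" "y[k:=a] \<notin> S" using ex_not_in[OF dc k y] by blast
    have "y[k:=a] \<in> EE n k S" unfolding EE_def using h a upd_words[OF y] by auto
    then show "\<exists>a<4. y[k:=a] \<in> EE n k S - S" using a by blast
  qed
  then show ?thesis unfolding EE_def by blast
qed

lemma bs_T:
  assumes dc: "double_code n S" and k: "k < n"
  shows "EE n k (EE n k S - S) - (EE n k S - S) = S"
  using EE_T[OF assms] self_EE[OF dc_sub[OF dc] k] by blast


lemma compl_of:
  assumes "double_code n S" "complementable n S" "k < n"
  shows "double_code n (EE n k S - S) \<and> complementable n (EE n k S - S)"
proof -
  obtain M where M: "double_MDS_code n M" "S \<subseteq> M" using assms(2) unfolding complementable_def by blast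
  have A: "double_code n (EE n k S - S) \<and> EE n k S - S \<subseteq> words n - M" using lemA[OF assms(1) M assms(3)] .
  then show ?thesis unfolding complementable_def using mds_compl[OF M(1)] by blast
qed

lemma nonempty_T:
  assumes "double_code n S" "S \<noteq> {}" "k < n"
  shows "EE n k S - S \<noteq> {}"
proof -
  obtain s where s: "s \<in> S" using assms(2) by blast
  have sw: "s \<in> words n" using s dc_sub[OF assms(1)] by blast
  obtain a where a: "a < 4" "s[k:=a] \<notin> S" using ex_not_in[OF assms(1) assms(3) sw] by blast
  have "(s[k:=a])[k:=s!k] = s" by simp
  then have "s[k:=a] \<in> EE n k S" unfolding EE_def using upd_words[OF sw a(1)] nth_words[OF sw assms(3)] s
    by (metis (mono_tags, lifting) mem_Collect_eq)
  then show ?thesis using a by blast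
qed

lemma lemB:
  assumes dc: "double_code n S" and pr: "prime_code n S" and k: "k < n"
  shows "prime_code n (EE n k S - S)"
proof -
  define T where "T = EE n k S - S"
  have cS: "complementable n S" using pr unfolding prime_code_def by blast
  have Sne: "S \<noteq> {}" using pr unfolding prime_code_def by blast
  obtain M where M: "double_MDS_code n M" "S \<subseteq> M" using cS unfolding complementable_def by blast
  have A: "double_code n T \<and> T \<subseteq> words n - M" unfolding T_def using lemA[OF dc M k] .
  have dcT: "double_code n T" using A by blast
  have cT: "complementable n T" unfolding T_def using compl_of[OF dc cS k] by blast
  have Tne: "T \<noteq> {}" unfolding T_def using nonempty_T[OF dc Sne k] .
  have ET: "EE n k T = EE n k S" unfolding T_def using EE_T[OF dc k] .
  have Tw: "T \<subseteq> words n" using dc_sub[OF dcT] .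
  have nopart: False if P: "card P \<ge> 2" "\<forall>X\<in>P. X \<noteq> {} \<and> double_code n X"
      "\<forall>X\<in>P. \<forall>Y\<in>P. X \<noteq> Y \<longrightarrow> X \<inter> Y = {}" "\<Union>P = T" for P
  proof -
    define f where "f X = EE n k X \<inter> S" for X
    have key: "(y[k:=b] \<in> X) = (y[k:=b] \<in> T)"
      if X: "X \<in> P" and y: "y \<in> words n" "a < 4" "y[k:=a] \<in> X" "b < 4" for X y a b
    proof -
      have dcX: "double_code n X" using P(2) X by blast
      have XT: "X \<subseteq> T" using P(4) X by blast
      have c1: "cnt (\<lambda>b. y[k:=b] \<in> X) = 2" using dc_row[OF dcX k y(1)] cnt_zero[of "\<lambda>b. y[k:=b] \<in> X"] y by blast
      have c2: "cnt (\<lambda>b. y[k:=b] \<in> T) = 2" using dc_row[OF dcT k y(1)] cnt_zero[of "\<lambda>b. y[k:=b] \<in> T"] y XT by blast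
      show ?thesis using c1 c2 XT y(4) by (intro cnt_eq_sub[of "\<lambda>b. y[k:=b] \<in> X" "\<lambda>b. y[k:=b] \<in> T" b]) auto
    qed
    have bsX: "EE n k X - X = f X" if X: "X \<in> P" for X
    proof
      have XT: "X \<subseteq> T" using P(4) X by blast
      show "EE n k X - X \<subseteq> f X"
      proof
        fix y assume y: "y \<in> EE n k X - X"
        then obtain a where ya: "y \<in> words n" "a < 4" "y[k:=a] \<in> X" "y \<notin> X" unfolding EE_def by auto
        have "(y[k:=y!k] \<in> X) = (y[k:=y!k] \<in> T)" by (rule key[OF X ya(1-3)]) (rule nth_words[OF ya(1) k])
        then have yT: "y \<notin> T" using ya by simp
        have "y \<in> EE n k T" using y XT unfolding EE_def by blast
        then have "y \<in> EE n k S" using ET by simp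
        then have "y \<in> S" using yT unfolding T_def by blast
        then show "y \<in> f X" using y unfolding f_def by blast
      qed
      show "f X \<subseteq> EE n k X - X" unfolding f_def using XT unfolding T_def by blast
    qed
    have fne: "f X \<noteq> {}" if X: "X \<in> P" for X
    proof -
      obtain t where t: "t \<in> X" using P(2) X by blast
      have tT: "t \<in> T" using P(4) X t by blast
      then have tw: "t \<in> words n" using Tw by blast
      have "t \<in> EE n k S" using tT unfolding T_def by blast
      then obtain a where a: "a < 4" "t[k:=a] \<in> S" unfolding EE_def by blast
      have "(t[k:=a])[k:=t!k] = t" by simp
      then have "t[k:=a] \<in> EE n k X" unfolding EE_def using upd_words[OF tw a(1)] nth_words[OF tw k] t
        by (metis (mono_tags, lifting) mem_Collect_eq)
      then show ?thesis using a unfolding f_def by blast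
    qed
    have fdisj: "f X \<inter> f Y = {}" if X: "X \<in> P" and Y: "Y \<in> P" and XY: "X \<noteq> Y" for X Y
    proof (rule ccontr)
      assume "f X \<inter> f Y \<noteq> {}"
      then obtain y where y: "y \<in> EE n k X" "y \<in> EE n k Y" unfolding f_def by blast
      obtain a1 where a1: "a1 < 4" "y[k:=a1] \<in> X" "y \<in> words n" using y(1) unfolding EE_def by blast
      obtain a2 where a2: "a2 < 4" "y[k:=a2] \<in> Y" using y(2) unfolding EE_def by blast
      have "y[k:=a2] \<in> T" using a2 Y P(4) by blast
      then have "y[k:=a2] \<in> X" using key[OF X a1(3) a1(1) a1(2) a2(1)] by blast
      then show False using P(3) X Y XY a2 by blast
    qed
    have fdc: "double_code n (f X)" if X: "X \<in> P" for X
    proof -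
      have dcX: "double_code n X" using P(2) X by blast
      have "X \<subseteq> words n - M" using P(4) X A by blast
      then have "double_code n (EE n k X - X) \<and> EE n k X - X \<subseteq> words n - (words n - M)"
        using lemA[OF dcX mds_compl[OF M(1)] _ k] by blast
      then show ?thesis using bsX[OF X] by simp
    qed
    have fU: "\<Union>(f ` P) = S"
    proof
      show "\<Union>(f ` P) \<subseteq> S" unfolding f_def by blast
      show "S \<subseteq> \<Union>(f ` P)"
      proof
        fix s assume s: "s \<in> S"
        have sw: "s \<in> words n" using s dc_sub[OF dc] by blast
        have "s \<in> EE n k T" using ET self_EE[OF dc_sub[OF dc] k] s by blast
        then obtain a where a: "a < 4" "s[k:=a] \<in> T" unfolding EE_def by blast
        then obtain X where X: "X \<in> P" "s[k:=a] \<in> X" using P(4) by blast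
        have "s \<in> EE n k X" unfolding EE_def using sw a X by blast
        then show "s \<in> \<Union>(f ` P)" using X s unfolding f_def by blast
      qed
    qed
    have finP: "finite P" using P(1) by (metis card.infinite not_numeral_le_zero)
    have inj: "inj_on f P"
    proof (rule inj_onI)
      fix X Y assume "X \<in> P" "Y \<in> P" "f X = f Y"
      then show "X = Y" using fdisj fne by fastforce
    qed
    have "card (f ` P) \<ge> 2" using card_image[OF inj] P(1) by simp
    moreover have "\<forall>Z\<in>f ` P. Z \<noteq> {} \<and> double_code n Z" using fne fdc by blast
    moreover have "\<forall>Z\<in>f ` P. \<forall>W\<in>f ` P. Z \<noteq> W \<longrightarrow> Z \<inter> W = {}" using fdisj by blast
    ultimately show False using fU pr unfolding prime_code_def by blast
  qed
  show ?thesis unfolding T_def[symmetric] prime_code_def using cT Tne nopart by blast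
qed

theorem proposition6:
  fixes n i :: nat and S :: "nat list set"
  assumes "double_code n S" and "i \<in> {1..n}"
  shows "(complementable n S \<longleftrightarrow>
            double_code n (bs_i n i S) \<and> complementable n (bs_i n i S))
       \<and> (prime_code n S \<longleftrightarrow>
            double_code n (bs_i n i S) \<and> prime_code n (bs_i n i S))"
proof -
  define k where "k = i - 1"
  have k: "k < n" using assms(2) unfolding k_def by auto
  have Sw: "S \<subseteq> words n" using dc_sub[OF assms(1)] .
  have ek: "ext_i n i X = EE n k X" if "X \<subseteq> words n" for X
    using ext_char[OF that assms(2)] unfolding k_def .
  have bsS: "bs_i n i S = EE n k S - S" unfolding bs_i_def using ek[OF Sw] by simp
  have bsT: "bs_i n i (EE n k S - S) = S" if "double_code n (EE n k S - S)"
  proof -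
    have "bs_i n i (EE n k S - S) = EE n k (EE n k S - S) - (EE n k S - S)"
      unfolding bs_i_def using ek[OF dc_sub[OF that]] by simp
    then show ?thesis using bs_T[OF assms(1) k] by simp
  qed
  have a1: "complementable n S \<Longrightarrow> double_code n (bs_i n i S) \<and> complementable n (bs_i n i S)"
    unfolding bsS using compl_of[OF assms(1) _ k] by blast
  have a2: "complementable n S" if "double_code n (bs_i n i S)" "complementable n (bs_i n i S)"
  proof -
    have d: "double_code n (EE n k S - S)" using that bsS by simp
    have "complementable n (EE n k (EE n k S - S) - (EE n k S - S))"
      using compl_of[OF d _ k] that bsS by simp
    then show ?thesis using bs_T[OF assms(1) k] by simp
  qed
  have b1: "double_code n (bs_i n i S) \<and> prime_code n (bs_i n i S)" if p: "prime_code n S"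
  proof -
    have "complementable n S" using p unfolding prime_code_def by blast
    then have "double_code n (bs_i n i S)" using a1 by blast
    moreover have "prime_code n (bs_i n i S)" using lemB[OF assms(1) p k] bsS by simp
    ultimately show ?thesis by blast
  qed
  have b2: "prime_code n S" if "double_code n (bs_i n i S)" "prime_code n (bs_i n i S)"
  proof -
    have d: "double_code n (EE n k S - S)" using that bsS by simp
    have "prime_code n (EE n k (EE n k S - S) - (EE n k S - S))"
      using lemB[OF d _ k] that bsS by simp
    then show ?thesis using bs_T[OF assms(1) k] by simp
  qed
  show ?thesis using a1 a2 b1 b2 by blast
qed

end
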